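(* Let $\mathcal{J}\neq\emptyset$ be a countable set, $\{e_{j,k}:j\in\mathcal{J},k\in\mathbb{N}_0\}$ an orthonormal basis of $\mathcal{H}$, and $\{w_{j,k}\}\subseteq\mathbb{C}$ a bounded family. Define $B\in\mathcal{B}(\mathcal{H})$ by $Be_{j,0}=0$ and $Be_{j,k}=w_{j,k-1}e_{j,k-1}$ for $k\ge1$. Then: (i) if no weight is zero, $B$ is cyclic; (ii) if no weight is zero and there is $g\in\bigcap_{n\ge1}\operatorname{ran}(B^n)$ such that for each $j\in\mathcal{J}$ we have $\langle g,e_{j,k}\rangle\neq0$ for infinitely many $k$, then $B$ has a cyclic vector belonging to $\bigcap_{n\ge1}\operatorname{ran}(B^n)$; (iii) $B$ is cyclic if and only if at most one weight $w_{j,k}$ is zero.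
   Context: An operator $T$ is cyclic if there is $h$ (a cyclic vector) with $\bigvee\{T^nh:n\in\mathbb{N}_0\}=\mathcal{H}$. *)

theory Defs
  imports "HOL-Analysis.Analysis"
begin

text \<open>Concrete model of a separable Hilbert space with orthonormal basis
  indexed by J x N_0: the space l2(J x N_0) of square-summable complex families.
  The index set J is the (nonempty, countable) type 'j.\<close>

definition ell2 :: "('j \<times> nat \<Rightarrow> complex) set" where
  "ell2 = {x. (\<lambda>p. (cmod (x p))\<^sup>2) summable_on UNIV}"

definition l2norm :: "('j \<times> nat \<Rightarrow> complex) \<Rightarrow> real" where
  "l2norm x = sqrt (\<Sum>\<^sub>\<infinity>p. (cmod (x p))\<^sup>2)"

definition l2inner :: "('j \<times> nat \<Rightarrow> complex) \<Rightarrow> ('j \<times> nat \<Rightarrow> complex) \<Rightarrow> complex" where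
  "l2inner x y = (\<Sum>\<^sub>\<infinity>p. x p * cnj (y p))"

definition basis_vec :: "'j \<Rightarrow> nat \<Rightarrow> ('j \<times> nat \<Rightarrow> complex)" where
  "basis_vec j k = (\<lambda>p. if p = (j, k) then 1 else 0)"

text \<open>Weighted backward shift: B e_{j,0} = 0, B e_{j,k} = w_{j,k-1} e_{j,k-1},
  i.e. (Bx)_{j,k} = w_{j,k} x_{j,k+1}.\<close>
definition bshift :: "('j \<times> nat \<Rightarrow> complex) \<Rightarrow> ('j \<times> nat \<Rightarrow> complex) \<Rightarrow> ('j \<times> nat \<Rightarrow> complex)" where
  "bshift w x = (\<lambda>(j, k). w (j, k) * x (j, Suc k))"

definition cyclic_vector :: "(('j \<times> nat \<Rightarrow> complex) \<Rightarrow> ('j \<times> nat \<Rightarrow> complex)) \<Rightarrow> ('j \<times> nat \<Rightarrow> complex) \<Rightarrow> bool" where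
  "cyclic_vector T h \<longleftrightarrow> h \<in> ell2 \<and>
     (\<forall>x\<in>ell2. \<forall>\<epsilon>>0. \<exists>(c::nat \<Rightarrow> complex) N.
        l2norm (\<lambda>p. x p - (\<Sum>n<N. c n * (T ^^ n) h p)) < \<epsilon>)"

definition cyclic_op :: "(('j \<times> nat \<Rightarrow> complex) \<Rightarrow> ('j \<times> nat \<Rightarrow> complex)) \<Rightarrow> bool" where
  "cyclic_op T \<longleftrightarrow> (\<exists>h. cyclic_vector T h)"

definition op_range :: "(('j \<times> nat \<Rightarrow> complex) \<Rightarrow> ('j \<times> nat \<Rightarrow> complex)) \<Rightarrow> ('j \<times> nat \<Rightarrow> complex) set" where
  "op_range T = T ` ell2"

end

theory Submission
  imports Defs
begin

definition Qn :: "('j \<times> nat \<Rightarrow> complex) \<Rightarrow> real" where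
  "Qn x = (\<Sum>\<^sub>\<infinity>p. (cmod (x p))\<^sup>2)"

lemma l2norm_Qn: "l2norm x = sqrt (Qn x)"
  by (simp add: l2norm_def Qn_def)

lemma Qn_nonneg: "Qn x \<ge> 0"
  unfolding Qn_def by (rule infsum_nonneg) simp

lemma fin_le_Qn:
  assumes "x \<in> ell2" "finite F"
  shows "(\<Sum>p\<in>F. (cmod (x p))\<^sup>2) \<le> Qn x"
  unfolding Qn_def
  by (rule finite_sum_le_infsum) (use assms in \<open>auto simp: ell2_def\<close>)

lemma Qn_bound:
  assumes "\<And>F. finite F \<Longrightarrow> (\<Sum>p\<in>F. (cmod (x p))\<^sup>2) \<le> b"
  shows "x \<in> ell2 \<and> Qn x \<le> b"
proof -
  have s: "(\<lambda>p. (cmod (x p))\<^sup>2) summable_on UNIV"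
    by (rule nonneg_bdd_above_summable_on) (use assms in \<open>auto simp: bdd_above_def\<close>)
  moreover have "Qn x \<le> b" unfolding Qn_def
    by (rule infsum_le_finite_sums[OF s]) (use assms in auto)
  ultimately show ?thesis by (simp add: ell2_def)
qed

lemma l2norm_bound:
  assumes "\<And>F. finite F \<Longrightarrow> (\<Sum>p\<in>F. (cmod (x p))\<^sup>2) \<le> b\<^sup>2" "b \<ge> 0"
  shows "x \<in> ell2 \<and> l2norm x \<le> b"
  using Qn_bound[OF assms(1)] assms(2) by (auto simp: l2norm_Qn real_sqrt_le_iff intro: real_le_lsqrt)

lemma L2_le_l2norm:
  assumes "x \<in> ell2" "finite F"
  shows "L2_set (\<lambda>p. cmod (x p)) F \<le> l2norm x"
  unfolding L2_set_def l2norm_Qn using fin_le_Qn[OF assms] by simp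

lemma l2norm_nonneg: "l2norm x \<ge> 0"
  by (simp add: l2norm_Qn Qn_nonneg)

lemma l2_add:
  assumes "x \<in> ell2" "y \<in> ell2"
  shows "(\<lambda>p. x p + y p) \<in> ell2 \<and> l2norm (\<lambda>p. x p + y p) \<le> l2norm x + l2norm y"
proof (rule l2norm_bound)
  fix F :: "('a \<times> nat) set" assume F: "finite F"
  have e: "(\<Sum>p\<in>F. (cmod (x p + y p))\<^sup>2) = (L2_set (\<lambda>p. cmod (x p + y p)) F)\<^sup>2"
    by (simp add: L2_set_def sum_nonneg)
  have "L2_set (\<lambda>p. cmod (x p + y p)) F \<le> L2_set (\<lambda>p. cmod (x p) + cmod (y p)) F"
    by (rule L2_set_mono) (auto simp: norm_triangle_ineq)
  also have "\<dots> \<le> L2_set (\<lambda>p. cmod (x p)) F + L2_set (\<lambda>p. cmod (y p)) F"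
    by (rule L2_set_triangle_ineq)
  also have "\<dots> \<le> l2norm x + l2norm y"
    using L2_le_l2norm[OF assms(1) F] L2_le_l2norm[OF assms(2) F] by simp
  finally show "(\<Sum>p\<in>F. (cmod (x p + y p))\<^sup>2) \<le> (l2norm x + l2norm y)\<^sup>2"
    unfolding e by (simp add: L2_set_nonneg power_mono)
next
  show "0 \<le> l2norm x + l2norm y" by (simp add: l2norm_nonneg add_nonneg_nonneg)
qed

lemma l2_scale:
  assumes "x \<in> ell2"
  shows "(\<lambda>p. c * x p) \<in> ell2 \<and> l2norm (\<lambda>p. c * x p) \<le> cmod c * l2norm x"
proof (rule l2norm_bound)
  fix F :: "('a \<times> nat) set" assume F: "finite F"
  have "(\<Sum>p\<in>F. (cmod (c * x p))\<^sup>2) = (cmod c)\<^sup>2 * (\<Sum>p\<in>F. (cmod (x p))\<^sup>2)"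
    by (simp add: norm_mult power_mult_distrib sum_distrib_left)
  also have "\<dots> \<le> (cmod c)\<^sup>2 * Qn x"
    by (rule mult_left_mono[OF fin_le_Qn[OF assms F]]) simp
  also have "\<dots> = (cmod c * l2norm x)\<^sup>2"
    by (simp add: l2norm_Qn power_mult_distrib Qn_nonneg)
  finally show "(\<Sum>p\<in>F. (cmod (c * x p))\<^sup>2) \<le> (cmod c * l2norm x)\<^sup>2" .
qed (simp add: l2norm_nonneg)

lemma l2_diff_mem:
  assumes "x \<in> ell2" "y \<in> ell2"
  shows "(\<lambda>p. x p - y p) \<in> ell2"
proof -
  have "(\<lambda>p. (-1) * y p) \<in> ell2" using l2_scale[OF assms(2)] by blast
  from l2_add[OF assms(1) this] show ?thesis by simp
qed

lemma l2_tri: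
  assumes "x \<in> ell2" "y \<in> ell2" "z \<in> ell2"
  shows "l2norm (\<lambda>p. x p - z p) \<le> l2norm (\<lambda>p. x p - y p) + l2norm (\<lambda>p. y p - z p)"
  using l2_add[OF l2_diff_mem[OF assms(1,2)] l2_diff_mem[OF assms(2,3)]] by simp

lemma l2_point:
  assumes "x \<in> ell2"
  shows "cmod (x p) \<le> l2norm x"
proof -
  have "(\<Sum>q\<in>{p}. (cmod (x q))\<^sup>2) \<le> Qn x" by (rule fin_le_Qn[OF assms]) simp
  then show ?thesis by (simp add: l2norm_Qn real_le_rsqrt)
qed

lemma l2_finsupp:
  assumes "finite {p. x p \<noteq> 0}"
  shows "x \<in> ell2"
proof -
  have "\<And>F. finite F \<Longrightarrow> (\<Sum>p\<in>F. (cmod (x p))\<^sup>2) \<le> (\<Sum>p\<in>{p. x p \<noteq> 0}. (cmod (x p))\<^sup>2)"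
  proof -
    fix F :: "('a \<times> nat) set" assume F: "finite F"
    have "(\<Sum>p\<in>F. (cmod (x p))\<^sup>2) = (\<Sum>p\<in>F \<inter> {p. x p \<noteq> 0}. (cmod (x p))\<^sup>2)"
      by (rule sum.mono_neutral_right) (use F in auto)
    also have "\<dots> \<le> (\<Sum>p\<in>{p. x p \<noteq> 0}. (cmod (x p))\<^sup>2)"
      by (rule sum_mono2[OF assms]) auto
    finally show "(\<Sum>p\<in>F. (cmod (x p))\<^sup>2) \<le> (\<Sum>p\<in>{p. x p \<noteq> 0}. (cmod (x p))\<^sup>2)" .
  qed
  then show ?thesis using Qn_bound by blast
qed

lemma zero_ell2: "(\<lambda>p. 0) \<in> ell2"
  by (rule l2_finsupp) simp

lemma l2norm_zero: "l2norm (\<lambda>p. 0) = 0"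
  by (simp add: l2norm_def)

lemma basis_ell2: "basis_vec j k \<in> ell2"
  by (rule l2_finsupp) (simp add: basis_vec_def)



definition Pw :: "('j \<times> nat \<Rightarrow> complex) \<Rightarrow> 'j \<Rightarrow> nat \<Rightarrow> nat \<Rightarrow> complex" where
  "Pw w j k s = (\<Prod>i<s. w (j, k + i))"

lemma bshift_app: "bshift w x (j, k) = w (j, k) * x (j, Suc k)"
  by (simp add: bshift_def)

lemma Pw_Suc: "Pw w j k (Suc s) = w (j, k) * Pw w j (Suc k) s"
  unfolding Pw_def by (simp add: prod.lessThan_Suc_shift del: prod.lessThan_Suc)

lemma bshift_pow: "(bshift w ^^ s) x (j, k) = Pw w j k s * x (j, k + s)"
proof (induction s arbitrary: k)
  case 0 then show ?case by (simp add: Pw_def)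
next
  case (Suc s)
  show ?case by (simp add: bshift_app Suc Pw_Suc)
qed

lemma bshift_bounded:
  assumes M: "\<forall>p. cmod (w p) \<le> M" and x: "x \<in> ell2"
  shows "bshift w x \<in> ell2 \<and> l2norm (bshift w x) \<le> M * l2norm x"
proof (rule l2norm_bound)
  fix F :: "('a \<times> nat) set" assume F: "finite F"
  define \<sigma> where "\<sigma> = (\<lambda>(j::'a, k). (j, Suc k))"
  have inj: "inj \<sigma>" by (auto simp: \<sigma>_def inj_def)
  have "(\<Sum>p\<in>F. (cmod (bshift w x p))\<^sup>2) \<le> (\<Sum>p\<in>F. M\<^sup>2 * (cmod (x (\<sigma> p)))\<^sup>2)"
  proof (rule sum_mono)
    fix p assume "p \<in> F"
    obtain j k where p: "p = (j, k)" by fastforce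
    have "cmod (w (j,k)) * cmod (x (j, Suc k)) \<le> M * cmod (x (j, Suc k))"
      by (rule mult_right_mono) (use M in auto)
    then have "(cmod (w (j,k)) * cmod (x (j, Suc k)))\<^sup>2 \<le> (M * cmod (x (j, Suc k)))\<^sup>2"
      by (rule power_mono) simp
    then show "(cmod (bshift w x p))\<^sup>2 \<le> M\<^sup>2 * (cmod (x (\<sigma> p)))\<^sup>2"
      by (simp add: p bshift_app \<sigma>_def norm_mult power_mult_distrib)
  qed
  also have "\<dots> = M\<^sup>2 * (\<Sum>p\<in>\<sigma> ` F. (cmod (x p))\<^sup>2)"
    by (simp add: sum_distrib_left sum.reindex[OF inj_on_subset[OF inj]])
  also have "\<dots> \<le> M\<^sup>2 * Qn x"
    by (rule mult_left_mono[OF fin_le_Qn[OF x]]) (use F in auto)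
  also have "\<dots> = (M * l2norm x)\<^sup>2"
    by (simp add: l2norm_Qn power_mult_distrib Qn_nonneg)
  finally show "(\<Sum>p\<in>F. (cmod (bshift w x p))\<^sup>2) \<le> (M * l2norm x)\<^sup>2" .
next
  have M0: "M \<ge> 0" using M norm_ge_zero order_trans by blast
  show "0 \<le> M * l2norm x" using M0 by (simp add: l2norm_nonneg)
qed

lemma bshift_pow_ell2:
  assumes M: "\<forall>p. cmod (w p) \<le> M" and x: "x \<in> ell2"
  shows "(bshift w ^^ n) x \<in> ell2"
  by (induction n) (use x bshift_bounded[OF M] in auto)

lemma bshift_diff: "bshift w (\<lambda>p. x p - y p) = (\<lambda>p. bshift w x p - bshift w y p)"
  by (auto simp: bshift_def algebra_simps)

definition inspan :: "('j \<times> nat \<Rightarrow> complex) \<Rightarrow> ('j \<times> nat \<Rightarrow> complex) \<Rightarrow> ('j \<times> nat \<Rightarrow> complex) \<Rightarrow> bool" where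
  "inspan w h y \<longleftrightarrow> (\<exists>c N. y = (\<lambda>p. \<Sum>n<N. c n * (bshift w ^^ n) h p))"

definition approx :: "('j \<times> nat \<Rightarrow> complex) \<Rightarrow> ('j \<times> nat \<Rightarrow> complex) \<Rightarrow> ('j \<times> nat \<Rightarrow> complex) \<Rightarrow> bool" where
  "approx w h x \<longleftrightarrow> x \<in> ell2 \<and> (\<forall>\<epsilon>>0. \<exists>y. inspan w h y \<and> l2norm (\<lambda>p. x p - y p) < \<epsilon>)"

lemma inspan_ell2:
  assumes M: "\<forall>p. cmod (w p) \<le> M" and h: "h \<in> ell2" and y: "inspan w h y"
  shows "y \<in> ell2"
proof -
  obtain c N where y: "y = (\<lambda>p. \<Sum>n<N. c n * (bshift w ^^ n) h p)"
    using y by (auto simp: inspan_def)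
  have "(\<lambda>p. \<Sum>n<N. c n * (bshift w ^^ n) h p) \<in> ell2"
  proof (induction N)
    case 0 then show ?case by (simp add: zero_ell2)
  next
    case (Suc N)
    have "(\<lambda>p. c N * (bshift w ^^ N) h p) \<in> ell2"
      using l2_scale[OF bshift_pow_ell2[OF M h]] by blast
    from l2_add[OF Suc this] show ?case by simp
  qed
  then show ?thesis by (simp add: y)
qed

lemma inspan_add:
  assumes "inspan w h y" "inspan w h z"
  shows "inspan w h (\<lambda>p. y p + z p)"
proof -
  obtain c N where y: "y = (\<lambda>p. \<Sum>n<N. c n * (bshift w ^^ n) h p)"
    using assms by (auto simp: inspan_def)
  obtain d L where z: "z = (\<lambda>p. \<Sum>n<L. d n * (bshift w ^^ n) h p)"
    using assms by (auto simp: inspan_def)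
  define e where "e = (\<lambda>n. (if n < N then c n else 0) + (if n < L then d n else 0))"
  have "(\<lambda>p. y p + z p) = (\<lambda>p. \<Sum>n<max N L. e n * (bshift w ^^ n) h p)"
  proof
    fix p
    have 1: "(\<Sum>n<max N L. (if n < N then c n else 0) * (bshift w ^^ n) h p) = y p"
      unfolding y by (rule sum.mono_neutral_cong_right) auto
    have 2: "(\<Sum>n<max N L. (if n < L then d n else 0) * (bshift w ^^ n) h p) = z p"
      unfolding z by (rule sum.mono_neutral_cong_right) auto
    show "y p + z p = (\<Sum>n<max N L. e n * (bshift w ^^ n) h p)"
      unfolding e_def distrib_right sum.distrib 1 2 ..
  qed
  then show ?thesis by (auto simp: inspan_def)
qed

lemma inspan_scale:
  assumes "inspan w h y"
  shows "inspan w h (\<lambda>p. a * y p)"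
proof -
  obtain c N where y: "y = (\<lambda>p. \<Sum>n<N. c n * (bshift w ^^ n) h p)"
    using assms by (auto simp: inspan_def)
  have "(\<lambda>p. a * y p) = (\<lambda>p. \<Sum>n<N. (a * c n) * (bshift w ^^ n) h p)"
    by (simp add: y sum_distrib_left mult.assoc)
  then show ?thesis by (auto simp: inspan_def)
qed

lemma inspan_zero: "inspan w h (\<lambda>p. 0)"
  unfolding inspan_def by (rule exI[of _ "\<lambda>n. 0"], rule exI[of _ 0]) simp

lemma inspan_pow: "inspan w h ((bshift w ^^ m) h)"
  unfolding inspan_def
  by (rule exI[of _ "\<lambda>n. if n = m then 1 else 0"], rule exI[of _ "Suc m"])
     (simp add: if_distrib cong: if_cong)

lemma inspan_shift:
  assumes "inspan w h y"
  shows "inspan w h (bshift w y)"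
proof -
  obtain c N where y: "y = (\<lambda>p. \<Sum>n<N. c n * (bshift w ^^ n) h p)"
    using assms by (auto simp: inspan_def)
  define e where "e = (\<lambda>n. if n = 0 then 0 else c (n - 1))"
  have "bshift w y = (\<lambda>p. \<Sum>n<Suc N. e n * (bshift w ^^ n) h p)"
  proof
    fix p :: "'a \<times> nat"
    obtain j k where p: "p = (j, k)" by fastforce
    have "(\<Sum>n<Suc N. e n * (bshift w ^^ n) h p) = (\<Sum>n<N. e (Suc n) * (bshift w ^^ Suc n) h p)"
      by (simp add: sum.lessThan_Suc_shift e_def del: sum.lessThan_Suc)
    also have "\<dots> = (\<Sum>n<N. c n * (w (j, k) * (bshift w ^^ n) h (j, Suc k)))"
      by (simp add: e_def p bshift_app)
    also have "\<dots> = bshift w y p"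
      by (simp add: p bshift_app y sum_distrib_left algebra_simps)
    finally show "bshift w y p = (\<Sum>n<Suc N. e n * (bshift w ^^ n) h p)" ..
  qed
  then show ?thesis unfolding inspan_def by blast
qed

context
  fixes w :: "'j \<times> nat \<Rightarrow> complex" and M :: real and h :: "'j \<times> nat \<Rightarrow> complex"
  assumes M: "\<forall>p. cmod (w p) \<le> M" and h: "h \<in> ell2"
begin

lemma approx_ell2: "approx w h x \<Longrightarrow> x \<in> ell2"
  by (simp add: approx_def)

lemma approx_add:
  assumes x: "approx w h x" and z: "approx w h z"
  shows "approx w h (\<lambda>p. x p + z p)"
proof -
  have xe: "x \<in> ell2" and ze: "z \<in> ell2" using x z by (auto simp: approx_def)
  have "\<exists>y. inspan w h y \<and> l2norm (\<lambda>p. x p + z p - y p) < \<epsilon>" if e: "\<epsilon> > 0" for \<epsilon>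
  proof -
    obtain y1 where y1: "inspan w h y1" "l2norm (\<lambda>p. x p - y1 p) < \<epsilon>/2"
      using x e by (auto simp: approx_def dest!: spec[of _ "\<epsilon>/2"])
    obtain y2 where y2: "inspan w h y2" "l2norm (\<lambda>p. z p - y2 p) < \<epsilon>/2"
      using z e by (auto simp: approx_def dest!: spec[of _ "\<epsilon>/2"])
    have a: "(\<lambda>p. x p - y1 p) \<in> ell2" "(\<lambda>p. z p - y2 p) \<in> ell2"
      using l2_diff_mem xe ze inspan_ell2[OF M h] y1 y2 by blast+
    have "l2norm (\<lambda>p. x p + z p - (y1 p + y2 p)) \<le> l2norm (\<lambda>p. x p - y1 p) + l2norm (\<lambda>p. z p - y2 p)"
      using l2_add[OF a] by (simp add: algebra_simps)
    then show ?thesis using y1 y2 inspan_add[OF y1(1) y2(1)] by (intro exI[of _ "\<lambda>p. y1 p + y2 p"]) auto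
  qed
  moreover have "(\<lambda>p. x p + z p) \<in> ell2" using l2_add[OF xe ze] by blast
  ultimately show ?thesis by (simp add: approx_def)
qed

lemma approx_scale:
  assumes x: "approx w h x"
  shows "approx w h (\<lambda>p. a * x p)"
proof -
  have xe: "x \<in> ell2" using x by (auto simp: approx_def)
  have "\<exists>y. inspan w h y \<and> l2norm (\<lambda>p. a * x p - y p) < \<epsilon>" if e: "\<epsilon> > 0" for \<epsilon>
  proof -
    have cp: "0 < cmod a + 1" by (rule add_nonneg_pos) auto
    have e': "\<epsilon> / (cmod a + 1) > 0" using e cp by (intro divide_pos_pos)
    obtain y1 where y1: "inspan w h y1" "l2norm (\<lambda>p. x p - y1 p) < \<epsilon> / (cmod a + 1)"
      using x e' by (auto simp: approx_def)
    have a: "(\<lambda>p. x p - y1 p) \<in> ell2"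
      using l2_diff_mem xe inspan_ell2[OF M h] y1 by blast
    have "l2norm (\<lambda>p. a * x p - a * y1 p) \<le> cmod a * l2norm (\<lambda>p. x p - y1 p)"
      using l2_scale[OF a, of a] by (simp add: algebra_simps)
    also have "\<dots> \<le> (cmod a + 1) * l2norm (\<lambda>p. x p - y1 p)"
      by (rule mult_right_mono) (auto simp: l2norm_nonneg)
    also have "\<dots> < (cmod a + 1) * (\<epsilon> / (cmod a + 1))"
      by (rule mult_strict_left_mono[OF y1(2)]) (rule cp)
    also have "\<dots> = \<epsilon>" using cp by simp
    finally show ?thesis using inspan_scale[OF y1(1), of a] by (intro exI[of _ "\<lambda>p. a * y1 p"]) auto
  qed
  moreover have "(\<lambda>p. a * x p) \<in> ell2" using l2_scale[OF xe] by blast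
  ultimately show ?thesis by (simp add: approx_def)
qed

lemma approx_closed:
  assumes x: "x \<in> ell2" and a: "\<And>\<epsilon>. \<epsilon> > 0 \<Longrightarrow> \<exists>z. approx w h z \<and> l2norm (\<lambda>p. x p - z p) < \<epsilon>"
  shows "approx w h x"
proof -
  have "\<exists>y. inspan w h y \<and> l2norm (\<lambda>p. x p - y p) < \<epsilon>" if e: "\<epsilon> > 0" for \<epsilon>
  proof -
    obtain z where z: "approx w h z" "l2norm (\<lambda>p. x p - z p) < \<epsilon>/2" using a[of "\<epsilon>/2"] e by auto
    obtain y where y: "inspan w h y" "l2norm (\<lambda>p. z p - y p) < \<epsilon>/2"
      using z e by (auto simp: approx_def dest!: spec[of _ "\<epsilon>/2"])
    have "l2norm (\<lambda>p. x p - y p) \<le> l2norm (\<lambda>p. x p - z p) + l2norm (\<lambda>p. z p - y p)"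
      by (rule l2_tri) (use x z y inspan_ell2[OF M h] in \<open>auto simp: approx_def\<close>)
    then show ?thesis using y z by (intro exI[of _ y]) auto
  qed
  then show ?thesis using x by (simp add: approx_def)
qed

lemma approx_inspan: "inspan w h y \<Longrightarrow> approx w h y"
  unfolding approx_def
  by (auto intro!: exI[of _ y] inspan_ell2[OF M h] simp: l2norm_zero)

lemma approx_shift:
  assumes x: "approx w h x"
  shows "approx w h (bshift w x)"
proof -
  have xe: "x \<in> ell2" using x by (auto simp: approx_def)
  have M0: "M \<ge> 0" using M norm_ge_zero order_trans by blast
  have "\<exists>y. inspan w h y \<and> l2norm (\<lambda>p. bshift w x p - y p) < \<epsilon>" if e: "\<epsilon> > 0" for \<epsilon>
  proof -
    have e': "\<epsilon> / (M + 1) > 0" using e M0 by simp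
    obtain y1 where y1: "inspan w h y1" "l2norm (\<lambda>p. x p - y1 p) < \<epsilon> / (M + 1)"
      using x e' by (auto simp: approx_def)
    have a: "(\<lambda>p. x p - y1 p) \<in> ell2"
      using l2_diff_mem xe inspan_ell2[OF M h] y1 by blast
    have "l2norm (\<lambda>p. bshift w x p - bshift w y1 p) \<le> M * l2norm (\<lambda>p. x p - y1 p)"
      using bshift_bounded[OF M a] by (simp add: bshift_diff)
    also have "\<dots> \<le> (M + 1) * l2norm (\<lambda>p. x p - y1 p)"
      by (rule mult_right_mono) (auto simp: l2norm_nonneg)
    also have "\<dots> < (M + 1) * (\<epsilon> / (M + 1))"
      by (rule mult_strict_left_mono[OF y1(2)]) (use M0 in simp)
    also have "\<dots> = \<epsilon>" using M0 by simp
    finally show ?thesis using inspan_shift[OF y1(1)] by (intro exI[of _ "bshift w y1"]) auto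
  qed
  moreover have "bshift w x \<in> ell2" using bshift_bounded[OF M xe] by blast
  ultimately show ?thesis by (simp add: approx_def)
qed

lemma approx_pow: "approx w h x \<Longrightarrow> approx w h ((bshift w ^^ n) x)"
  by (induction n) (auto intro: approx_shift)

lemma approx_diff:
  assumes "approx w h x" "approx w h z"
  shows "approx w h (\<lambda>p. x p - z p)"
  using approx_add[OF assms(1) approx_scale[OF assms(2), of "-1"]] by simp

lemma approx_sum:
  assumes "finite F" "\<And>i. i \<in> F \<Longrightarrow> approx w h (f i)"
  shows "approx w h (\<lambda>p. \<Sum>i\<in>F. f i p)"
  using assms
proof (induction F rule: finite_induct)
  case empty then show ?case by (simp add: approx_inspan inspan_zero)
next
  case (insert i F)
  then show ?case using approx_add[of "f i" "\<lambda>p. \<Sum>i\<in>F. f i p"] by simp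
qed

end


definition ev :: "'j \<times> nat \<Rightarrow> ('j \<times> nat \<Rightarrow> complex)" where
  "ev q = (\<lambda>p. if p = q then 1 else 0)"

lemma basis_vec_ev: "basis_vec j k = ev (j, k)"
  by (simp add: basis_vec_def ev_def)

lemma ev_ell2: "ev q \<in> ell2"
  by (rule l2_finsupp) (simp add: ev_def)

lemma tail_small:
  assumes x: "x \<in> ell2" and e: "\<epsilon> > 0"
  shows "\<exists>F. finite F \<and> l2norm (\<lambda>p. if p \<in> F then 0 else x p) < \<epsilon>"
proof -
  have s: "(\<lambda>p. (cmod (x p))\<^sup>2) summable_on UNIV" using x by (simp add: ell2_def)
  have e2: "\<epsilon>\<^sup>2/2 > 0" using e by simp
  obtain F where F: "finite F" "dist (\<Sum>p\<in>F. (cmod (x p))\<^sup>2) (Qn x) \<le> \<epsilon>\<^sup>2/2"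
    using infsum_finite_approximation[OF s e2] unfolding Qn_def by blast
  have "(\<lambda>p. if p \<in> F then 0 else x p) \<in> ell2 \<and> l2norm (\<lambda>p. if p \<in> F then 0 else x p) \<le> sqrt (\<epsilon>\<^sup>2/2)"
  proof (rule l2norm_bound)
    fix G :: "('a \<times> nat) set" assume G: "finite G"
    have "(\<Sum>p\<in>G. (cmod (if p \<in> F then 0 else x p))\<^sup>2) = (\<Sum>p\<in>G - F. (cmod (x p))\<^sup>2)"
      by (rule sum.mono_neutral_cong_right) (use G in auto)
    also have "\<dots> = (\<Sum>p\<in>(G - F) \<union> F. (cmod (x p))\<^sup>2) - (\<Sum>p\<in>F. (cmod (x p))\<^sup>2)"
      by (subst sum.union_disjoint) (use G F in auto)
    also have "\<dots> \<le> Qn x - (\<Sum>p\<in>F. (cmod (x p))\<^sup>2)"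
      using fin_le_Qn[OF x, of "(G - F) \<union> F"] G F by simp
    also have "\<dots> \<le> \<epsilon>\<^sup>2/2" using F(2) unfolding dist_real_def by linarith
    also have "\<dots> = (sqrt (\<epsilon>\<^sup>2/2))\<^sup>2" by simp
    finally show "(\<Sum>p\<in>G. (cmod (if p \<in> F then 0 else x p))\<^sup>2) \<le> (sqrt (\<epsilon>\<^sup>2/2))\<^sup>2" .
  qed simp
  moreover have "sqrt (\<epsilon>\<^sup>2/2) < \<epsilon>"
  proof -
    have "sqrt (\<epsilon>\<^sup>2/2) < sqrt (\<epsilon>\<^sup>2)" using e2 by (intro real_sqrt_less_mono) simp
    then show ?thesis using e by simp
  qed
  ultimately show ?thesis using F(1) by force
qed

lemma approx_dense:
  assumes M: "\<forall>p. cmod (w p) \<le> M" and h: "h \<in> ell2" and x: "x \<in> ell2"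
    and b: "\<And>q. x q \<noteq> 0 \<Longrightarrow> approx w h (ev q)"
  shows "approx w h x"
proof (rule approx_closed[OF M h x])
  fix \<epsilon> :: real assume e: "\<epsilon> > 0"
  obtain F where F: "finite F" "l2norm (\<lambda>p. if p \<in> F then 0 else x p) < \<epsilon>"
    using tail_small[OF x e] by blast
  define F' where "F' = F \<inter> {q. x q \<noteq> 0}"
  have F': "finite F'" using F by (simp add: F'_def)
  define z where "z = (\<lambda>p. \<Sum>q\<in>F'. x q * ev q p)"
  have "approx w h z" unfolding z_def
    by (rule approx_sum[OF M h F']) (auto simp: F'_def intro!: approx_scale[OF M h] b)
  moreover have "(\<lambda>p. x p - z p) = (\<lambda>p. if p \<in> F then 0 else x p)"
  proof
    fix p
    have "z p = (if p \<in> F' then x p else 0)"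
      unfolding z_def ev_def using F' by (simp add: if_distrib cong: if_cong)
    then show "x p - z p = (if p \<in> F then 0 else x p)" by (auto simp: F'_def)
  qed
  ultimately show "\<exists>z. approx w h z \<and> l2norm (\<lambda>p. x p - z p) < \<epsilon>" using F by auto
qed



definition lprod :: "('j \<times> nat \<Rightarrow> complex) \<Rightarrow> 'j \<Rightarrow> nat \<Rightarrow> nat \<Rightarrow> real" where
  "lprod w j a b = (\<Prod>i\<in>{a..<b}. min 1 (cmod (w (j, i))))"

lemma lprod_pos:
  assumes "\<And>i. a \<le> i \<Longrightarrow> i < b \<Longrightarrow> w (j, i) \<noteq> 0"
  shows "lprod w j a b > 0"
  unfolding lprod_def by (rule prod_pos) (use assms in auto)

lemma lprod_le1: "lprod w j a b \<le> 1"
  unfolding lprod_def by (rule prod_le_1) auto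

lemma Pw_atLeast: "Pw w j c s = (\<Prod>i\<in>{c..<c+s}. w (j, i))"
proof -
  have "(\<Prod>i\<in>{c..<c+s}. w (j, i)) = (\<Prod>i\<in>(\<lambda>i. c + i) ` {..<s}. w (j, i))"
  proof -
    have "{c..<c+s} = (\<lambda>i. c + i) ` {..<s}"
      by (simp add: lessThan_atLeast0 add.commute)
    then show ?thesis by simp
  qed
  also have "\<dots> = (\<Prod>i<s. w (j, c + i))"
    by (subst prod.reindex) (auto simp: inj_on_def)
  finally show ?thesis by (simp add: Pw_def)
qed

lemma lprod_le:
  assumes "a \<le> c" "c + s \<le> b"
  shows "lprod w j a b \<le> cmod (Pw w j c s)"
proof -
  have split: "{a..<b} = {c..<c+s} \<union> ({a..<b} - {c..<c+s})" using assms by auto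
  have "lprod w j a b = (\<Prod>i\<in>{c..<c+s}. min 1 (cmod (w (j, i)))) *
        (\<Prod>i\<in>{a..<b} - {c..<c+s}. min 1 (cmod (w (j, i))))"
    unfolding lprod_def by (subst split, subst prod.union_disjoint) auto
  also have "\<dots> \<le> (\<Prod>i\<in>{c..<c+s}. min 1 (cmod (w (j, i)))) * 1"
    by (rule mult_left_mono) (auto intro!: prod_le_1 prod_nonneg)
  also have "\<dots> \<le> (\<Prod>i\<in>{c..<c+s}. cmod (w (j, i)))"
    by (simp add: prod_mono)
  also have "\<dots> = cmod (Pw w j c s)"
    by (simp add: Pw_atLeast prod_norm)
  finally show ?thesis .
qed

lemma Pw_bound:
  assumes M: "\<forall>p. cmod (w p) \<le> M"
  shows "cmod (Pw w j k s) \<le> M ^ s"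
proof -
  have "cmod (Pw w j k s) = (\<Prod>i<s. cmod (w (j, k + i)))"
    by (simp add: Pw_def prod_norm)
  also have "\<dots> \<le> (\<Prod>i<s. M)" by (rule prod_mono) (use M in auto)
  finally show ?thesis by simp
qed

lemma sum_over_range:
  assumes "finite G" "inj q" "\<And>p. p \<notin> range q \<Longrightarrow> \<phi> p = (0::real)"
  shows "(\<Sum>p\<in>G. \<phi> p) = (\<Sum>m\<in>q -` G. \<phi> (q m))"
proof -
  have "(\<Sum>p\<in>G. \<phi> p) = (\<Sum>p\<in>G \<inter> range q. \<phi> p)"
    by (rule sum.mono_neutral_right) (use assms in auto)
  also have "G \<inter> range q = q ` (q -` G)" by auto
  also have "(\<Sum>p\<in>q ` (q -` G). \<phi> p) = (\<Sum>m\<in>q -` G. \<phi> (q m))"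
    using sum.reindex[of q "q -` G" \<phi>] assms(2) by (simp add: inj_on_def inj_def)
  finally show ?thesis .
qed

lemma geom_fin: "finite S \<Longrightarrow> (\<Sum>i\<in>S. (1/4::real) ^ i) \<le> 4/3"
proof -
  assume S: "finite S"
  have "(\<Sum>i\<in>S. (1/4::real) ^ i) \<le> (\<Sum>i. (1/4::real) ^ i)"
    by (rule sum_le_suminf) (auto simp: S summable_geometric)
  also have "\<dots> = 4/3" by (simp add: suminf_geometric)
  finally show ?thesis .
qed

locale constr =
  fixes w :: "'j::countable \<times> nat \<Rightarrow> complex" and M :: real and K :: nat
  assumes M: "\<forall>p. cmod (w p) \<le> M" and M1: "M \<ge> 1"
    and wK: "\<And>j i. K \<le> i \<Longrightarrow> w (j, i) \<noteq> 0"
begin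

definition jj :: "nat \<Rightarrow> 'j" where "jj m = from_nat (fst (prod_decode m))"
definition nn :: "nat \<Rightarrow> nat" where "nn m = m * m + K"
definition q :: "nat \<Rightarrow> 'j \<times> nat" where "q m = (jj m, nn m)"
definition LL :: "nat \<Rightarrow> real" where "LL m = lprod w (jj m) K (nn m)"
definition RR :: "nat \<Rightarrow> real" where "RR m = lprod w (jj m) (nn m) (nn m + m)"
definition ff :: "nat \<Rightarrow> real" where
  "ff m = min (1/2) (min (LL m / (2^(m+2) * M^(nn m) * (m+1))) (RR (Suc m) / 2^(Suc m)))"

fun aa :: "nat \<Rightarrow> real" where
  "aa 0 = 1"
| "aa (Suc m) = aa m * ff m"

lemma jj_often: "\<exists>m\<ge>t. jj m = j"
  by (rule exI[of _ "prod_encode (to_nat j, t)"]) (simp add: jj_def le_prod_encode_2)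

lemma nn_mono: "m' < m \<Longrightarrow> nn m' < nn m"
  by (simp add: nn_def mult_strict_mono)

lemma inj_q: "inj q"
proof (rule injI)
  fix x y assume "q x = q y"
  then have "nn x = nn y" by (simp add: q_def)
  then show "x = y" using nn_mono by (metis linorder_neqE_nat less_irrefl)
qed

lemma LL_pos: "LL m > 0"
  unfolding LL_def by (rule lprod_pos) (use wK in auto)

lemma RR_pos: "RR m > 0"
  unfolding RR_def by (rule lprod_pos) (use wK in \<open>auto simp: nn_def\<close>)

lemma ff_pos: "ff m > 0"
  using LL_pos[of m] RR_pos[of "Suc m"] M1 by (simp add: ff_def)

lemma aa_pos: "aa m > 0"
  by (induction m) (auto simp: ff_pos)

lemma aa_le1: "aa m \<le> 1"
proof (induction m)
  case (Suc m)
  have "ff m \<le> 1/2" by (simp add: ff_def)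
  then have "aa m * ff m \<le> 1 * 1"
    using Suc aa_pos[of m] ff_pos[of m] by (intro mult_mono) auto
  then show ?case by simp
qed simp

lemma aa_half: "aa (Suc m) \<le> aa m / 2"
proof -
  have "ff m \<le> 1/2" by (simp add: ff_def)
  then show ?thesis using aa_pos[of m] by (simp add: mult_left_mono)
qed

lemma aa_RR: "aa m \<le> RR m / 2^m"
proof (cases m)
  case 0 then show ?thesis by (simp add: RR_def lprod_def)
next
  case (Suc k)
  have "ff k \<le> RR (Suc k) / 2^(Suc k)" by (simp add: ff_def)
  then have "aa k * ff k \<le> 1 * (RR (Suc k) / 2^(Suc k))"
    using aa_le1[of k] aa_pos[of k] ff_pos[of k] by (intro mult_mono) auto
  then show ?thesis by (simp add: Suc)
qed

lemma aa_LL: "aa (Suc m) \<le> aa m * (LL m / (2^(m+2) * M^(nn m) * (m+1)))"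
proof -
  have "ff m \<le> LL m / (2^(m+2) * M^(nn m) * (m+1))" unfolding ff_def by linarith
  then have "aa m * ff m \<le> aa m * (LL m / (2^(m+2) * M^(nn m) * (m+1)))"
    using aa_pos[of m] by (intro mult_left_mono) auto
  then show ?thesis by (simp only: aa.simps)
qed

lemma aa_pow: "aa m \<le> (1/2)^m"
proof (induction m)
  case (Suc m) then show ?case using aa_half[of m] by simp
qed simp

lemma aa_tail: "m < m' \<Longrightarrow> aa m' \<le> aa (Suc m) * (1/2)^(m' - Suc m)"
proof (induction m' rule: less_induct)
  case (less m')
  show ?case
  proof (cases "m' = Suc m")
    case True then show ?thesis by simp
  next
    case False
    then obtain k where k: "m' = Suc k" "m < k" using less.prems by (cases m') auto
    have "aa m' \<le> aa k / 2" using aa_half[of k] k by simp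
    also have "\<dots> \<le> aa (Suc m) * (1/2)^(k - Suc m) / 2"
      using less.IH[of k] k by (simp del: aa.simps)
    also have "\<dots> = aa (Suc m) * (1/2)^(m' - Suc m)"
    proof -
      have "m' - Suc m = Suc (k - Suc m)" using k by simp
      then show ?thesis by (simp del: aa.simps)
    qed
    finally show ?thesis .
  qed
qed

lemma tail_sum:
  assumes "finite S" "\<And>m'. m' \<in> S \<Longrightarrow> m < m'"
  shows "(\<Sum>m'\<in>S. (aa m')\<^sup>2) \<le> 2 * (aa (Suc m))\<^sup>2"
proof -
  have "(\<Sum>m'\<in>S. (aa m')\<^sup>2) \<le> (\<Sum>m'\<in>S. (aa (Suc m))\<^sup>2 * (1/4)^(m' - Suc m))"
  proof (rule sum_mono)
    fix m' assume "m' \<in> S"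
    then have "aa m' \<le> aa (Suc m) * (1/2)^(m' - Suc m)" using assms aa_tail by blast
    then have "(aa m')\<^sup>2 \<le> (aa (Suc m) * (1/2)^(m' - Suc m))\<^sup>2"
      using aa_pos[of m'] by (intro power_mono) auto
    moreover have "(aa (Suc m) * (1/2)^(m' - Suc m))\<^sup>2 = (aa (Suc m))\<^sup>2 * (1/4)^(m' - Suc m)"
    proof -
      have "((1/2::real)^(m' - Suc m))\<^sup>2 = ((1/2)\<^sup>2)^(m' - Suc m)"
        by (simp only: power_mult[symmetric] mult.commute)
      also have "((1/2::real)\<^sup>2) = 1/4" by (simp add: power2_eq_square)
      finally show ?thesis by (simp only: power_mult_distrib)
    qed
    ultimately show "(aa m')\<^sup>2 \<le> (aa (Suc m))\<^sup>2 * (1/4)^(m' - Suc m)" by simp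
  qed
  also have "\<dots> = (aa (Suc m))\<^sup>2 * (\<Sum>i\<in>(\<lambda>m'. m' - Suc m) ` S. (1/4)^i)"
  proof -
    have "inj_on (\<lambda>m'. m' - Suc m) S"
    proof (rule inj_onI)
      fix x y assume "x \<in> S" "y \<in> S" "x - Suc m = y - Suc m"
      with assms(2)[of x] assms(2)[of y] show "x = y" by linarith
    qed
    then show ?thesis by (simp add: sum.reindex sum_distrib_left)
  qed
  also have "\<dots> \<le> (aa (Suc m))\<^sup>2 * (4/3)"
    by (rule mult_left_mono[OF geom_fin]) (use assms in auto)
  also have "\<dots> \<le> 2 * (aa (Suc m))\<^sup>2" by simp
  finally show ?thesis .
qed

end


lemma alg_id: fixes a l A Z1 Z2 :: real
  shows "a>0 \<Longrightarrow> l>0 \<Longrightarrow> A>0 \<Longrightarrow> Z1>0 \<Longrightarrow> Z2 > 0 \<Longrightarrow> (1/(a*l)) * A * (a * (l / (Z1 * A * Z2))) = 1/(Z1*Z2)"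
  by (simp add: field_simps)

lemma quarter: fixes x :: real shows "x > 0 \<Longrightarrow> 2 * (1/(4*x))\<^sup>2 \<le> (1/x)\<^sup>2"
  by (simp add: power2_eq_square field_simps)

lemma Pw_nz: "(\<And>i. k \<le> i \<Longrightarrow> w (j, i) \<noteq> 0) \<Longrightarrow> Pw w j k s \<noteq> 0"
  unfolding Pw_def by (auto simp: prod_zero_iff)

context constr
begin

definition hp :: "'j \<times> nat \<Rightarrow> complex" where
  "hp p = (if p \<in> range q then complex_of_real (aa (inv q p)) else 0)"

lemma hp_q: "hp (q m) = aa m"
  using inj_q by (simp add: hp_def)

lemma fst_q [simp]: "fst (q m) = jj m" and snd_q [simp]: "snd (q m) = nn m"
  by (simp_all add: q_def)

lemma cmod_hp_q: "cmod (hp (q m)) = aa m"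
  using aa_pos[of m] by (simp add: hp_q)

lemma hp_off: "p \<notin> range q \<Longrightarrow> hp p = 0"
  by (simp add: hp_def)

lemma finite_vq: "finite G \<Longrightarrow> finite (q -` G)"
  using inj_q by (simp add: finite_vimageI)

lemma hp_ell2: "hp \<in> ell2"
proof -
  have "\<And>F. finite F \<Longrightarrow> (\<Sum>p\<in>F. (cmod (hp p))\<^sup>2) \<le> 4/3"
  proof -
    fix F :: "('j \<times> nat) set" assume F: "finite F"
    have "(\<Sum>p\<in>F. (cmod (hp p))\<^sup>2) = (\<Sum>m\<in>q -` F. (cmod (hp (q m)))\<^sup>2)"
      by (rule sum_over_range[OF F inj_q]) (simp add: hp_off)
    also have "\<dots> \<le> (\<Sum>m\<in>q -` F. (1/4::real) ^ m)"
    proof (rule sum_mono)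
      fix m
      have "aa m \<le> (1/2)^m" by (rule aa_pow)
      then have "(aa m)\<^sup>2 \<le> ((1/2)^m)\<^sup>2" using aa_pos[of m] by (intro power_mono) auto
      also have "((1/2::real)^m)\<^sup>2 = (1/4)^m"
        by (simp add: power2_eq_square power_mult_distrib[symmetric])
      finally show "(cmod (hp (q m)))\<^sup>2 \<le> (1/4) ^ m"
        using aa_pos[of m] by (simp add: hp_q)
    qed
    also have "\<dots> \<le> 4/3" by (rule geom_fin[OF finite_vq[OF F]])
    finally show "(\<Sum>p\<in>F. (cmod (hp p))\<^sup>2) \<le> 4/3" .
  qed
  then show ?thesis using Qn_bound by blast
qed

lemma hp_range: "hp \<in> op_range (bshift w ^^ n)"
proof -
  define y where "y = (\<lambda>(j, k). if n \<le> k then hp (j, k - n) / Pw w j (k - n) n else 0)"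
  define g where "g = (\<lambda>m. (aa m / cmod (Pw w (jj m) (nn m) n))\<^sup>2)"
  have g_le: "g m \<le> (1/4)^m" if "n \<le> m" for m
  proof -
    have "RR m \<le> cmod (Pw w (jj m) (nn m) n)"
      unfolding RR_def by (rule lprod_le) (use that in auto)
    then have P: "cmod (Pw w (jj m) (nn m) n) > 0" using RR_pos[of m] by linarith
    have "aa m \<le> cmod (Pw w (jj m) (nn m) n) / 2^m"
      using aa_RR[of m] divide_right_mono[OF \<open>RR m \<le> _\<close>, of "2^m"] by simp
    then have "aa m / cmod (Pw w (jj m) (nn m) n) \<le> (1/2)^m"
      using P by (simp add: divide_le_eq power_divide mult.commute)
    then have "(aa m / cmod (Pw w (jj m) (nn m) n))\<^sup>2 \<le> ((1/2)^m)\<^sup>2"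
      using aa_pos[of m] P by (intro power_mono) auto
    also have "((1/2::real)^m)\<^sup>2 = (1/4)^m"
      by (simp add: power2_eq_square power_mult_distrib[symmetric])
    finally show ?thesis by (simp add: g_def)
  qed
  have sg: "summable g"
    by (rule summable_comparison_test'[of "\<lambda>m. (1/4::real)^m" n])
       (use g_le in \<open>auto simp: summable_geometric g_def\<close>)
  have "y \<in> ell2"
  proof -
    have "\<And>G. finite G \<Longrightarrow> (\<Sum>p\<in>G. (cmod (y p))\<^sup>2) \<le> suminf g"
    proof -
      fix G :: "('j \<times> nat) set" assume G: "finite G"
      define \<tau> where "\<tau> = (\<lambda>(j::'j, k). (j, k - n))"
      define \<phi> where "\<phi> = (\<lambda>p. (cmod (hp p / Pw w (fst p) (snd p) n))\<^sup>2)"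
      define G' where "G' = G \<inter> {p. n \<le> snd p}"
      have inj: "inj_on \<tau> G'" by (auto simp: inj_on_def \<tau>_def G'_def)
      have "(\<Sum>p\<in>G. (cmod (y p))\<^sup>2) = (\<Sum>p\<in>G'. \<phi> (\<tau> p))"
        by (rule sum.mono_neutral_cong_right) (use G in \<open>auto simp: G'_def y_def \<phi>_def \<tau>_def split: if_splits\<close>)
      also have "\<dots> = (\<Sum>p\<in>\<tau> ` G'. \<phi> p)" by (simp add: sum.reindex[OF inj])
      also have "\<dots> = (\<Sum>m\<in>q -` (\<tau> ` G'). \<phi> (q m))"
        by (rule sum_over_range) (use G inj_q in \<open>auto simp: G'_def \<phi>_def hp_off\<close>)
      also have "\<dots> = (\<Sum>m\<in>q -` (\<tau> ` G'). g m)"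
        by (rule sum.cong) (simp_all add: \<phi>_def g_def cmod_hp_q norm_divide)
      also have "\<dots> \<le> suminf g"
        by (rule sum_le_suminf[OF sg]) (use G in \<open>auto simp: G'_def finite_vq g_def\<close>)
      finally show "(\<Sum>p\<in>G. (cmod (y p))\<^sup>2) \<le> suminf g" .
    qed
    then show ?thesis using Qn_bound by blast
  qed
  moreover have "(bshift w ^^ n) y = hp"
  proof
    fix p :: "'j \<times> nat"
    obtain j k where p: "p = (j, k)" by fastforce
    show "(bshift w ^^ n) y p = hp p"
    proof (cases "p \<in> range q")
      case True
      then obtain m where "p = q m" by auto
      then have "K \<le> k" using p by (auto simp: q_def nn_def)
      then have "Pw w j k n \<noteq> 0" using wK by (intro Pw_nz) auto
      then show ?thesis by (simp add: p bshift_pow y_def)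
    next
      case False
      then show ?thesis by (simp add: p bshift_pow y_def hp_off)
    qed
  qed
  ultimately show ?thesis unfolding op_range_def by (metis image_eqI)
qed

lemma gap:
  assumes "m' < m" "k < m"
  shows "nn m' + k < nn m"
proof -
  obtain u where u: "m = Suc u" using assms by (cases m) auto
  have "m' * m' \<le> u * u" using assms u by (intro mult_le_mono) auto
  moreover have "k \<le> u" using assms u by simp
  ultimately show ?thesis using u by (simp add: nn_def)
qed

lemma key:
  fixes r :: "'j \<times> nat \<Rightarrow> complex"
  assumes r0: "\<And>j k. K \<le> k \<Longrightarrow> r (j, k) = 0" and Kk: "K \<le> k" and e: "\<epsilon> > 0"
  shows "\<exists>y. inspan w (\<lambda>p. hp p + r p) y \<and> l2norm (\<lambda>p. ev (j, k) p - y p) < \<epsilon>"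
proof -
  define h where "h = (\<lambda>p. hp p + r p)"
  obtain t :: nat where t: "t > 0" "inverse (real t) < \<epsilon>"
    using ex_inverse_of_nat_less[OF e] by blast
  obtain m where m: "m \<ge> max t (Suc k)" "jj m = j" using jj_often by blast
  have km: "k < m" and tm: "t \<le> m" using m by auto
  define s where "s = nn m - k"
  have mm: "m \<le> m * m" by (cases m) auto
  have kmm: "k \<le> m * m" using km mm by linarith
  have ks: "k + s = nn m" and sK: "K \<le> s" using kmm unfolding s_def nn_def by linarith+
  have Pnz: "Pw w j k s \<noteq> 0" using wK Kk by (intro Pw_nz) auto
  have LLle: "LL m \<le> cmod (Pw w j k s)"
    unfolding LL_def m(2) by (rule lprod_le) (use Kk ks in auto)
  have am: "aa m > 0" by (rule aa_pos)
  define c where "c = 1 / (complex_of_real (aa m) * Pw w j k s)"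
  define y where "y = (\<lambda>p. c * (bshift w ^^ s) h p)"
  have ins: "inspan w h y" unfolding y_def by (rule inspan_scale[OF inspan_pow])
  have hs: "(bshift w ^^ s) h (j', k') = Pw w j' k' s * hp (j', k' + s)" for j' k'
    using r0[of "k' + s" j'] sK by (simp add: bshift_pow h_def)
  define D where "D = (\<lambda>p. ev (j, k) p - y p)"
  have Djk: "D (j, k) = 0"
  proof -
    have "hp (j, k + s) = aa m" using hp_q[of m] m(2) ks by (simp add: q_def)
    then show ?thesis using Pnz am by (simp add: D_def ev_def y_def hs c_def)
  qed
  have M0: "M \<ge> 0" using M1 by simp
  have cmodc: "cmod c = 1 / (aa m * cmod (Pw w j k s))"
    using am by (simp add: c_def norm_divide norm_mult)
  have Dp: "cmod (D p) \<le> cmod c * M^s * cmod (hp (fst p, snd p + s))" if "p \<noteq> (j, k)" for p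
  proof -
    obtain j' k' where p: "p = (j', k')" by fastforce
    have "cmod (D p) = cmod c * cmod (Pw w j' k' s) * cmod (hp (j', k' + s))"
    proof -
      have "ev (j, k) (j', k') = 0" using that unfolding p by (simp add: ev_def)
      then show ?thesis by (simp add: p D_def y_def hs norm_mult)
    qed
    also have "\<dots> \<le> cmod c * M^s * cmod (hp (j', k' + s))"
      by (intro mult_right_mono mult_left_mono Pw_bound[OF M]) auto
    finally show ?thesis by (simp add: p)
  qed
  define \<sigma> where "\<sigma> = (\<lambda>(j'::'j, k'). (j', k' + s))"
  have inj\<sigma>: "inj \<sigma>" by (auto simp: inj_def \<sigma>_def)
  have bound: "(\<Sum>p\<in>G. (cmod (D p))\<^sup>2) \<le> (1 / real (m + 1))\<^sup>2" if G: "finite G" for G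
  proof -
    define G' where "G' = G - {(j, k)}"
    have G'f: "finite G'" using G by (simp add: G'_def)
    have "(\<Sum>p\<in>G. (cmod (D p))\<^sup>2) = (\<Sum>p\<in>G'. (cmod (D p))\<^sup>2)"
      by (rule sum.mono_neutral_right) (use G Djk in \<open>auto simp: G'_def\<close>)
    also have "\<dots> \<le> (\<Sum>p\<in>G'. (cmod c * M^s)\<^sup>2 * (cmod (hp (\<sigma> p)))\<^sup>2)"
    proof (rule sum_mono)
      fix p assume "p \<in> G'"
      then have "p \<noteq> (j, k)" by (simp add: G'_def)
      from Dp[OF this] have "(cmod (D p))\<^sup>2 \<le> (cmod c * M^s * cmod (hp (fst p, snd p + s)))\<^sup>2"
        by (intro power_mono) auto
      then show "(cmod (D p))\<^sup>2 \<le> (cmod c * M^s)\<^sup>2 * (cmod (hp (\<sigma> p)))\<^sup>2"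
        by (simp add: \<sigma>_def split_beta power_mult_distrib)
    qed
    also have "\<dots> = (cmod c * M^s)\<^sup>2 * (\<Sum>p\<in>\<sigma> ` G'. (cmod (hp p))\<^sup>2)"
      by (simp add: sum_distrib_left sum.reindex[OF inj_on_subset[OF inj\<sigma>]])
    also have "(\<Sum>p\<in>\<sigma> ` G'. (cmod (hp p))\<^sup>2) = (\<Sum>m'\<in>q -` (\<sigma> ` G'). (aa m')\<^sup>2)"
      by (subst sum_over_range[OF _ inj_q]) (use G'f in \<open>auto simp: hp_off cmod_hp_q\<close>)
    also have "(cmod c * M^s)\<^sup>2 * (\<Sum>m'\<in>q -` (\<sigma> ` G'). (aa m')\<^sup>2) \<le> (cmod c * M^s)\<^sup>2 * (2 * (aa (Suc m))\<^sup>2)"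
    proof (rule mult_left_mono)
    show "(\<Sum>m'\<in>q -` (\<sigma> ` G'). (aa m')\<^sup>2) \<le> 2 * (aa (Suc m))\<^sup>2"
    proof (rule tail_sum)
      show "finite (q -` (\<sigma> ` G'))" using G'f by (simp add: finite_vq)
      fix m' assume "m' \<in> q -` (\<sigma> ` G')"
      then obtain j' k' where jk': "(j', k') \<in> G'" "q m' = (j', k' + s)"
        by (auto simp: \<sigma>_def)
      show "m < m'"
      proof (rule ccontr)
        assume "\<not> m < m'"
        then consider "m' = m" | "m' < m" by linarith
        then show False
        proof cases
          case 1
          then have "j' = j" "k' = k" using jk'(2) m(2) ks by (auto simp: q_def)
          then show False using jk'(1) by (simp add: G'_def)
        next
          case 2
          have "nn m' + k < nn m" by (rule gap[OF 2 km])
          moreover have "nn m' = k' + s" using jk'(2) by (simp add: q_def)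
          ultimately show False using ks by linarith
        qed
      qed
    qed
    qed simp
    also have "(cmod c * M^s)\<^sup>2 * (2 * (aa (Suc m))\<^sup>2) = 2 * (cmod c * M^s * aa (Suc m))\<^sup>2"
      by (simp add: power_mult_distrib)
    also have "\<dots> \<le> (1 / real (m + 1))\<^sup>2"
    proof -
      have Ppos: "cmod (Pw w j k s) > 0" using Pnz by simp
      have LLp: "LL m > 0" by (rule LL_pos)
      have "M^s \<le> M^(nn m)" using M1 ks by (intro power_increasing) auto
      have X: "cmod c * M^s * aa (Suc m) \<le> (1 / (aa m * LL m)) * M^(nn m) * (aa m * (LL m / (2^(m+2) * M^(nn m) * (m+1))))"
      proof (intro mult_mono)
        show "cmod c \<le> 1 / (aa m * LL m)" unfolding cmodc
          using am LLp LLle by (intro divide_left_mono mult_left_mono mult_pos_pos) auto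
      qed (use \<open>M^s \<le> M^(nn m)\<close> aa_LL[of m] am LLp M0 aa_pos[of "Suc m"] in auto)
      also have "\<dots> = 1 / (2^(m+2) * real (m+1))"
      proof -
        have Mp: "M ^ nn m > 0" using M1 by simp
        then show ?thesis by (intro alg_id am LLp) auto
      qed
      also have "\<dots> \<le> 1 / (4 * real (m+1))"
        by (intro divide_left_mono mult_right_mono) (auto simp: power_add)
      finally have X': "cmod c * M^s * aa (Suc m) \<le> 1 / (4 * real (m+1))" .
      have "(cmod c * M^s * aa (Suc m))\<^sup>2 \<le> (1 / (4 * real (m+1)))\<^sup>2"
        by (rule power_mono[OF X']) (use am aa_pos[of "Suc m"] M0 in auto)
      then show ?thesis using quarter[of "real (m+1)"] by linarith
    qed
    finally show ?thesis .
  qed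
  have "l2norm D \<le> 1 / real (m + 1)"
    using l2norm_bound[of D "1 / real (m+1)"] bound by simp
  also have "1 / real (m + 1) < \<epsilon>"
  proof -
    have "1 / real (m + 1) \<le> inverse (real t)"
      using t tm by (simp add: inverse_eq_divide frac_le)
    then show ?thesis using t by linarith
  qed
  finally show ?thesis using ins by (auto simp: D_def h_def)
qed

end


lemma Pw_nz2: "(\<And>i. k \<le> i \<Longrightarrow> i < k + s \<Longrightarrow> w (j, i) \<noteq> 0) \<Longrightarrow> Pw w j k s \<noteq> 0"
  unfolding Pw_def by (auto simp: prod_zero_iff)

lemma bshift_pow_ev: "(bshift w ^^ s) (ev (j, k + s)) = (\<lambda>p. Pw w j k s * ev (j, k) p)"
proof
  fix p :: "'a \<times> nat"
  obtain j' k' where p: "p = (j', k')" by fastforce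
  show "(bshift w ^^ s) (ev (j, k + s)) p = Pw w j k s * ev (j, k) p"
    by (auto simp: p bshift_pow ev_def)
qed

lemma approx_down:
  assumes M: "\<forall>p. cmod (w p) \<le> M" and h: "h \<in> ell2"
    and a: "approx w h (ev (j, k + s))" and P: "Pw w j k s \<noteq> 0"
  shows "approx w h (ev (j, k))"
proof -
  have "approx w h (\<lambda>p. Pw w j k s * ev (j, k) p)"
    using approx_pow[OF M h a, of s] by (simp add: bshift_pow_ev)
  from approx_scale[OF M h this, of "inverse (Pw w j k s)"]
  show ?thesis using P by (simp add: field_simps)
qed

lemma Pw_zero: "w (j, k) = 0 \<Longrightarrow> 0 < n \<Longrightarrow> Pw w j k n = 0"
  unfolding Pw_def by (rule prod_zero) (auto intro: bexI[of _ 0])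

lemma cyclic_final:
  assumes M: "\<forall>p. cmod (w p) \<le> M" and h: "h \<in> ell2"
    and a: "\<And>j k. approx w h (ev (j, k))"
  shows "cyclic_vector (bshift w) h"
  unfolding cyclic_vector_def
proof (intro conjI ballI allI impI)
  show "h \<in> ell2" by (rule h)
  fix x :: "'a \<times> nat \<Rightarrow> complex" and \<epsilon> :: real assume x: "x \<in> ell2" and e: "\<epsilon> > 0"
  have "approx w h x" by (rule approx_dense[OF M h x]) (use a in auto)
  then obtain y where "inspan w h y" "l2norm (\<lambda>p. x p - y p) < \<epsilon>"
    using e by (auto simp: approx_def)
  then show "\<exists>c N. l2norm (\<lambda>p. x p - (\<Sum>n<N. c n * (bshift w ^^ n) h p)) < \<epsilon>"
    by (auto simp: inspan_def)
qed

theorem no_zero: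
  fixes w :: "'j::countable \<times> nat \<Rightarrow> complex"
  assumes M: "\<forall>p. cmod (w p) \<le> M" and nz: "\<forall>p. w p \<noteq> 0"
  shows "\<exists>h \<in> (\<Inter>n\<in>{1..}. op_range (bshift w ^^ n)). cyclic_vector (bshift w) h"
proof -
  define M' where "M' = max M 1"
  have M': "\<forall>p. cmod (w p) \<le> M'" using M by (auto simp: M'_def intro: le_max_iff_disj[THEN iffD2])
  interpret constr w M' 0
    by unfold_locales (use M' nz in \<open>auto simp: M'_def\<close>)
  have "cyclic_vector (bshift w) hp"
  proof (rule cyclic_final[OF M' hp_ell2])
    fix j k
    have "\<forall>\<epsilon>>0. \<exists>y. inspan w hp y \<and> l2norm (\<lambda>p. ev (j, k) p - y p) < \<epsilon>"
      using key[of "\<lambda>p. 0" k] by simp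
    then show "approx w hp (ev (j, k))" by (simp add: approx_def ev_ell2)
  qed
  moreover have "hp \<in> (\<Inter>n\<in>{1..}. op_range (bshift w ^^ n))" using hp_range by blast
  ultimately show ?thesis by blast
qed

theorem one_zero:
  fixes w :: "'j::countable \<times> nat \<Rightarrow> complex"
  assumes M: "\<forall>p. cmod (w p) \<le> M" and z: "\<And>p. w p = 0 \<longleftrightarrow> p = (j0, k0)"
  shows "cyclic_op (bshift w)"
proof -
  define M' where "M' = max M 1"
  have M': "\<forall>p. cmod (w p) \<le> M'" using M by (auto simp: M'_def intro: le_max_iff_disj[THEN iffD2])
  interpret constr w M' "Suc k0"
    by unfold_locales (use M' z in \<open>auto simp: M'_def\<close>)
  define h where "h = (\<lambda>p. hp p + ev (j0, k0) p)"
  have h: "h \<in> ell2" unfolding h_def using l2_add[OF hp_ell2 ev_ell2] by blast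
  have big: "approx w h (ev (j, k))" if "Suc k0 \<le> k" for j k
  proof -
    have "\<forall>\<epsilon>>0. \<exists>y. inspan w h y \<and> l2norm (\<lambda>p. ev (j, k) p - y p) < \<epsilon>"
      unfolding h_def using key[of "ev (j0, k0)" k] that by (auto simp: ev_def)
    then show ?thesis by (simp add: approx_def ev_ell2)
  qed
  have ahp: "approx w h hp"
  proof (rule approx_dense[OF M' h hp_ell2])
    fix p assume "hp p \<noteq> 0"
    then obtain m where "p = q m" using hp_off by blast
    then show "approx w h (ev p)" using big[of "nn m" "jj m"] by (simp add: q_def nn_def)
  qed
  have ah: "approx w h h"
    by (rule approx_inspan[OF M' h]) (use inspan_pow[of w h 0] in simp)
  have a0: "approx w h (ev (j0, k0))"
    using approx_diff[OF M' h ah ahp] by (simp add: h_def)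
  have "approx w h (ev (j, k))" for j k
  proof (cases "Suc k0 \<le> k")
    case True then show ?thesis by (rule big)
  next
    case False
    show ?thesis
    proof (cases "j = j0")
      case True
      then have kk: "k + (k0 - k) = k0" using False by simp
      have "approx w h (ev (j, k + (k0 - k)))" using a0 True kk by simp
      then show ?thesis
        by (rule approx_down[OF M' h]) (rule Pw_nz2, use z True in auto)
    next
      case jn: False
      have kk: "k + (Suc k0 - k) = Suc k0" using False by simp
      have "approx w h (ev (j, k + (Suc k0 - k)))" using big[of "Suc k0" j] kk by simp
      then show ?thesis
        by (rule approx_down[OF M' h]) (rule Pw_nz2, use z jn in auto)
    qed
  qed
  then have "cyclic_vector (bshift w) h" by (intro cyclic_final[OF M' h])
  then show ?thesis by (auto simp: cyclic_op_def)
qed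


lemma span_at_zero:
  assumes "w p = 0"
  shows "(\<Sum>n<N. c n * (bshift w ^^ n) h p) = (if 0 < N then c 0 else 0) * h p"
proof (induction N)
  case (Suc N)
  obtain j k where p: "p = (j, k)" by fastforce
  show ?case
  proof (cases N)
    case 0 then show ?thesis by simp
  next
    case (Suc N')
    have "(bshift w ^^ N) h p = Pw w j k N * h (j, k + N)" by (simp only: p bshift_pow)
    then have "(bshift w ^^ N) h p = 0"
      using Pw_zero[of w j k N] assms Suc by (simp add: p)
    then show ?thesis using Suc.IH Suc by simp
  qed
qed simp

lemma cyclic_at_most_one:
  fixes w :: "'j \<times> nat \<Rightarrow> complex"
  assumes M: "\<forall>p. cmod (w p) \<le> M" and cyc: "cyclic_op (bshift w)"
    and wp: "w p = 0" and wq: "w q = 0"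
  shows "p = q"
proof (rule ccontr)
  assume pq: "p \<noteq> q"
  obtain h where h: "cyclic_vector (bshift w) h" using cyc by (auto simp: cyclic_op_def)
  have he: "h \<in> ell2" using h by (simp add: cyclic_vector_def)
  have get: "\<exists>d. cmod (ev r p - d * h p) < 1/2 \<and> cmod (ev r q - d * h q) < 1/2" for r
  proof -
    obtain c N where cN: "l2norm (\<lambda>p'. ev r p' - (\<Sum>n<N. c n * (bshift w ^^ n) h p')) < 1/2"
      using h ev_ell2[of r] unfolding cyclic_vector_def by (meson half_gt_zero zero_less_one)
    define S where "S = (\<lambda>p'. \<Sum>n<N. c n * (bshift w ^^ n) h p')"
    have "inspan w h S" unfolding inspan_def S_def by blast
    then have Se: "S \<in> ell2" by (rule inspan_ell2[OF M he])
    have De: "(\<lambda>p'. ev r p' - S p') \<in> ell2" by (rule l2_diff_mem[OF ev_ell2 Se])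
    define d where "d = (if 0 < N then c 0 else 0)"
    have "cmod (ev r p - S p) < 1/2" using l2_point[OF De, of p] cN by (simp add: S_def)
    moreover have "cmod (ev r q - S q) < 1/2" using l2_point[OF De, of q] cN by (simp add: S_def)
    moreover have "S p = d * h p" "S q = d * h q"
      using span_at_zero[where N=N and c=c and h=h and w=w and p=p, OF wp] span_at_zero[where N=N and c=c and h=h and w=w and p=q, OF wq]
      by (simp_all add: S_def d_def)
    ultimately show ?thesis by auto
  qed
  obtain d1 where d1: "cmod (1 - d1 * h p) < 1/2" "cmod (d1 * h q) < 1/2"
    using get[of p] pq by (auto simp: ev_def)
  obtain d2 where d2: "cmod (d2 * h p) < 1/2" "cmod (1 - d2 * h q) < 1/2"
    using get[of q] pq by (auto simp: ev_def)
  have g1: "cmod (d1 * h p) > 1/2"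
    using d1(1) norm_triangle_ineq2[of 1 "d1 * h p"] by simp
  have g2: "cmod (d2 * h q) > 1/2"
    using d2(2) norm_triangle_ineq2[of 1 "d2 * h q"] by simp
  have "cmod (d1 * h p) * cmod (d2 * h q) > 1/2 * (1/2)"
    by (rule mult_strict_mono) (use g1 g2 in auto)
  moreover have "cmod (d1 * h q) * cmod (d2 * h p) < 1/2 * (1/2)"
    by (rule mult_strict_mono') (use d1 d2 in auto)
  moreover have "cmod (d1 * h p) * cmod (d2 * h q) = cmod (d1 * h q) * cmod (d2 * h p)"
    by (simp add: norm_mult)
  ultimately show False by linarith
qed

theorem mainTheorem16:
  fixes w :: "'j::countable \<times> nat \<Rightarrow> complex"
  assumes bounded: "\<exists>M. \<forall>p. cmod (w p) \<le> M"
  shows "((\<forall>p. w p \<noteq> 0) \<longrightarrow> cyclic_op (bshift w))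
    \<and> (((\<forall>p. w p \<noteq> 0) \<and>
         (\<exists>g \<in> (\<Inter>n\<in>{1..}. op_range (bshift w ^^ n)).
            \<forall>j. infinite {k. l2inner g (basis_vec j k) \<noteq> 0}))
        \<longrightarrow> (\<exists>h \<in> (\<Inter>n\<in>{1..}. op_range (bshift w ^^ n)). cyclic_vector (bshift w) h))
    \<and> (cyclic_op (bshift w) \<longleftrightarrow> (\<forall>p q. w p = 0 \<and> w q = 0 \<longrightarrow> p = q))"
proof -
  obtain M where M: "\<forall>p. cmod (w p) \<le> M" using bounded by blast
  have A: "(\<forall>p. w p \<noteq> 0) \<longrightarrow> (\<exists>h \<in> (\<Inter>n\<in>{1..}. op_range (bshift w ^^ n)). cyclic_vector (bshift w) h)"
    using no_zero[OF M] by blast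
  have C: "cyclic_op (bshift w) \<longleftrightarrow> (\<forall>p q. w p = 0 \<and> w q = 0 \<longrightarrow> p = q)"
  proof
    assume "cyclic_op (bshift w)"
    then show "\<forall>p q. w p = 0 \<and> w q = 0 \<longrightarrow> p = q"
      using cyclic_at_most_one[OF M] by blast
  next
    assume one: "\<forall>p q. w p = 0 \<and> w q = 0 \<longrightarrow> p = q"
    show "cyclic_op (bshift w)"
    proof (cases "\<exists>p. w p = 0")
      case True
      then obtain j0 k0 where z0: "w (j0, k0) = 0" by auto
      have "\<And>p. w p = 0 \<longleftrightarrow> p = (j0, k0)" using one z0 by blast
      then show ?thesis by (rule one_zero[OF M])
    next
      case False
      then show ?thesis using A by (auto simp: cyclic_op_def)
    qed
  qed
  show ?thesis using A C by (auto simp: cyclic_op_def)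
qed


end
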